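(* Consider a time-invariant UMCO channel on finite alphabets and suppose that for every time-invariant channel input distribution $\pi^\infty$ the output transition matrix $\mathbf P(\pi^\infty)=\{\mathbf P^{\pi^\infty}(b_0|b_{-1})\}_{b_0,b_{-1}\in\mathbb B}$ is irreducible. Then for every $\pi^\infty$ and every initial distribution $\mu$, $$J(\pi^\infty,\mu)=\nu(\pi^\infty)^T\ell(\pi^\infty)=:J(\pi^\infty),$$ which is independent of $\mu$, where $\nu(\pi^\infty)$ is the unique invariant distribution, $\mathbf P(\pi^\infty)\nu(\pi^\infty)=\nu(\pi^\infty)$. If moreover there is a time-invariant $\pi^{\infty,*}$ with $J(\pi^{\infty,*})=\max_{\pi^\infty}J(\pi^\infty)$, then there exist $V:\mathbb B\to\mathbb R$ such that $$J(\pi^{\infty,*})+V(b_{-1})=\sup_{\pi^\infty(\cdot|b_{-1})}\Big\{\ell(b_{-1},\pi^\infty(b_{-1}))+\sum_{z\in\mathbb B}V(z)\mathbf P^{\pi^\infty}(z|b_{-1})\Big\}\quad\forall b_{-1}\in\mathbb B,$$ and $J(\pi^{\infty,*})=C^{FB,UMCO}_{A^\infty\to B^\infty}=\liminf_{n\to\infty}\frac1n\sup_{\pi^\infty}\mathbf E^{\pi^\infty}_\mu[\sum_{i=0}^{n-1}\log\frac{\mathbf P(B_i|B_{i-1},A_i)}{\mathbf P^{\pi^\infty}(B_i|B_{i-1})}]$ for every $\mu$.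
   Context: Time-invariant UMCO channel $\mathbf P(b_i|b_{i-1},a_i)$ on finite alphabets $\mathbb A,\mathbb B$; time-invariant input $\pi^\infty(a_i|b_{i-1})$; $\mathbf P^{\pi^\infty}(b_i|b_{i-1})=\sum_a\mathbf P(b_i|b_{i-1},a)\pi^\infty(a|b_{i-1})$. $\ell(b,\pi^\infty(b))=\sum_{a}\sum_{b'}\log\frac{\mathbf P(b'|b,a)}{\mathbf P^{\pi^\infty}(b'|b)}\mathbf P(b'|b,a)\pi^\infty(a|b)$, and $\ell(\pi^\infty)\in\mathbb R^{|\mathbb B|}$ is the vector of these values. $J(\pi^\infty,\mu)=\liminf_{n\to\infty}\frac1n\mathbf E^{\pi^\infty}_\mu[\sum_{i=0}^{n-1}\log\frac{\mathbf P(B_i|B_{i-1},A_i)}{\mathbf P^{\pi^\infty}(B_i|B_{i-1})}]$, with $B_{-1}\sim\mu$. *)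

theory Defs
  imports "HOL-Analysis.Analysis"
begin

text \<open>Conventions. Channel: P b a b' = P(b'|b,a) (b = b_{i-1}, a = a_i, b' = b_i).
  Time-invariant input: p b a = p(a|b). Logarithms are natural logarithms.\<close>

definition is_dist :: "('x::finite \<Rightarrow> real) \<Rightarrow> bool" where
  "is_dist q \<longleftrightarrow> (\<forall>x. 0 \<le> q x) \<and> sum q UNIV = 1"

definition umco_channel :: "('b::finite \<Rightarrow> 'a::finite \<Rightarrow> 'b \<Rightarrow> real) \<Rightarrow> bool" where
  "umco_channel P \<longleftrightarrow> (\<forall>b a. is_dist (P b a))"

definition ti_policy :: "('b::finite \<Rightarrow> 'a::finite \<Rightarrow> real) \<Rightarrow> bool" where
  "ti_policy p \<longleftrightarrow> (\<forall>b. is_dist (p b))"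

definition outK :: "('b::finite \<Rightarrow> 'a::finite \<Rightarrow> 'b \<Rightarrow> real) \<Rightarrow> ('b \<Rightarrow> 'a \<Rightarrow> real) \<Rightarrow> 'b \<Rightarrow> 'b \<Rightarrow> real" where
  "outK P p b b' = (\<Sum>a\<in>UNIV. P b a b' * p b a)"

definition ell1 :: "('b::finite \<Rightarrow> 'a::finite \<Rightarrow> 'b \<Rightarrow> real) \<Rightarrow> 'b \<Rightarrow> ('a \<Rightarrow> real) \<Rightarrow> real" where
  "ell1 P b q = (\<Sum>a\<in>UNIV. \<Sum>b'\<in>UNIV.
      ln (P b a b' / (\<Sum>a'\<in>UNIV. P b a' b' * q a')) * P b a b' * q a)"

definition ell :: "('b::finite \<Rightarrow> 'a::finite \<Rightarrow> 'b \<Rightarrow> real) \<Rightarrow> ('b \<Rightarrow> 'a \<Rightarrow> real) \<Rightarrow> 'b \<Rightarrow> real" where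
  "ell P p b = ell1 P b (p b)"

text \<open>marg P p mu i = distribution of B_{i-1} when B_{-1} ~ mu,
  A_i ~ p(.|B_{i-1}), B_i ~ P(.|B_{i-1},A_i).\<close>
fun marg :: "('b::finite \<Rightarrow> 'a::finite \<Rightarrow> 'b \<Rightarrow> real) \<Rightarrow> ('b \<Rightarrow> 'a \<Rightarrow> real) \<Rightarrow> ('b \<Rightarrow> real) \<Rightarrow> nat \<Rightarrow> 'b \<Rightarrow> real" where
  "marg P p mu 0 = mu"
| "marg P p mu (Suc i) = (\<lambda>b'. \<Sum>b\<in>UNIV. \<Sum>a\<in>UNIV. marg P p mu i b * p b a * P b a b')"

text \<open>E^pi_mu [ sum_{i=0}^{n-1} log (P(B_i|B_{i-1},A_i) / P^p(B_i|B_{i-1})) ], computed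
  from the joint law of (B_{i-1}, A_i, B_i).\<close>
definition expsum :: "('b::finite \<Rightarrow> 'a::finite \<Rightarrow> 'b \<Rightarrow> real) \<Rightarrow> ('b \<Rightarrow> 'a \<Rightarrow> real) \<Rightarrow> ('b \<Rightarrow> real) \<Rightarrow> nat \<Rightarrow> real" where
  "expsum P p mu n = (\<Sum>i<n. \<Sum>b\<in>UNIV. \<Sum>a\<in>UNIV. \<Sum>b'\<in>UNIV.
      marg P p mu i b * p b a * P b a b' * ln (P b a b' / outK P p b b'))"

definition Jmu :: "('b::finite \<Rightarrow> 'a::finite \<Rightarrow> 'b \<Rightarrow> real) \<Rightarrow> ('b \<Rightarrow> 'a \<Rightarrow> real) \<Rightarrow> ('b \<Rightarrow> real) \<Rightarrow> ereal" where
  "Jmu P p mu = liminf (\<lambda>n. ereal (expsum P p mu n / real n))"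

fun kpow :: "('b::finite \<Rightarrow> 'b \<Rightarrow> real) \<Rightarrow> nat \<Rightarrow> 'b \<Rightarrow> 'b \<Rightarrow> real" where
  "kpow K 0 = (\<lambda>x y. if x = y then 1 else 0)"
| "kpow K (Suc n) = (\<lambda>x z. \<Sum>y\<in>UNIV. kpow K n x y * K y z)"

definition irreducible_kernel :: "('b::finite \<Rightarrow> 'b \<Rightarrow> real) \<Rightarrow> bool" where
  "irreducible_kernel K \<longleftrightarrow> (\<forall>x y. \<exists>n. kpow K n x y > 0)"

definition invariant_dist :: "('b::finite \<Rightarrow> 'a::finite \<Rightarrow> 'b \<Rightarrow> real) \<Rightarrow> ('b \<Rightarrow> 'a \<Rightarrow> real) \<Rightarrow> ('b \<Rightarrow> real) \<Rightarrow> bool" where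
  "invariant_dist P p nu \<longleftrightarrow> is_dist nu \<and> (\<forall>b'. (\<Sum>b\<in>UNIV. outK P p b b' * nu b) = nu b')"

definition Jinf :: "('b::finite \<Rightarrow> 'a::finite \<Rightarrow> 'b \<Rightarrow> real) \<Rightarrow> ('b \<Rightarrow> 'a \<Rightarrow> real) \<Rightarrow> real" where
  "Jinf P p = (\<Sum>b\<in>UNIV. (THE nu. invariant_dist P p nu) b * ell P p b)"

definition capacity_FB :: "('b::finite \<Rightarrow> 'a::finite \<Rightarrow> 'b \<Rightarrow> real) \<Rightarrow> ('b \<Rightarrow> real) \<Rightarrow> ereal" where
  "capacity_FB P mu = liminf (\<lambda>n. ereal (1 / real n) *
      (SUP p\<in>{p. ti_policy p}. ereal (expsum P p mu n)))"

end

theory Submission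
  imports Defs
begin


definition stoch :: "('b::finite \<Rightarrow> 'b \<Rightarrow> real) \<Rightarrow> bool" where
  "stoch K \<longleftrightarrow> (\<forall>x y. 0 \<le> K x y) \<and> (\<forall>x. sum (K x) UNIV = 1)"

lemma kpow_nonneg: "stoch K \<Longrightarrow> 0 \<le> kpow K n x y"
  by (induction n arbitrary: y) (auto simp: stoch_def intro!: sum_nonneg)

lemma kpow_harm:
  assumes "\<forall>x. h x = (\<Sum>y\<in>UNIV. K x y * h y)"
  shows "h x = (\<Sum>y\<in>UNIV. kpow K n x y * h y)"
proof (induction n)
  case 0
  have "(\<Sum>y\<in>UNIV. (if x = y then 1 else 0) * h y) = (\<Sum>y\<in>UNIV. if x = y then h y else 0)"
    by (intro sum.cong) auto
  then show ?case by simp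
next
  case (Suc n)
  have "(\<Sum>z\<in>UNIV. kpow K (Suc n) x z * h z) = (\<Sum>z\<in>UNIV. \<Sum>y\<in>UNIV. kpow K n x y * K y z * h z)"
    by (simp add: sum_distrib_right)
  also have "\<dots> = (\<Sum>y\<in>UNIV. kpow K n x y * (\<Sum>z\<in>UNIV. K y z * h z))"
    by (subst sum.swap) (simp add: sum_distrib_left mult.assoc)
  also have "\<dots> = (\<Sum>y\<in>UNIV. kpow K n x y * h y)"
  proof -
    have e: "\<And>y. (\<Sum>z\<in>UNIV. K y z * h z) = h y" using assms by metis
    show ?thesis by (simp only: e)
  qed
  finally show ?case using Suc by simp
qed

lemma kpow_inv:
  assumes "\<forall>y. (\<Sum>x\<in>UNIV. w x * K x y) = w y"
  shows "(\<Sum>x\<in>UNIV. w x * kpow K n x y) = w y"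
proof (induction n arbitrary: y)
  case 0
  then show ?case by (simp add: if_distrib cong: if_cong)
next
  case (Suc n)
  have "(\<Sum>x\<in>UNIV. w x * kpow K (Suc n) x y) = (\<Sum>z\<in>UNIV. (\<Sum>x\<in>UNIV. w x * kpow K n x z) * K z y)"
    by (simp add: sum_distrib_left sum_distrib_right mult.assoc) (rule sum.swap)
  also have "\<dots> = w y" using Suc assms by simp
  finally show ?case .
qed

lemma harmonic_const:
  fixes K :: "'b::finite \<Rightarrow> 'b \<Rightarrow> real"
  assumes st: "stoch K" and irr: "irreducible_kernel K"
    and h: "\<forall>x. h x = (\<Sum>y\<in>UNIV. K x y * h y)"
  shows "h x = h y"
proof -
  have rs: "(\<Sum>z\<in>UNIV. kpow K n x z) = 1" for n x
    using kpow_harm[of "\<lambda>_. 1" K x n] st by (simp add: stoch_def)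
  have "Max (range h) \<in> range h" by (intro Max_in) auto
  then obtain x0 where "Max (range h) = h x0" by blast
  then have x0: "\<forall>z. h z \<le> h x0" using Max_ge[of "range h"] by auto
  have all: "h z = h x0" for z
  proof -
    obtain n where n: "kpow K n x0 z > 0" using irr unfolding irreducible_kernel_def by blast
    have "(\<Sum>y\<in>UNIV. kpow K n x0 y * (h x0 - h y)) = h x0 * (\<Sum>y\<in>UNIV. kpow K n x0 y) - (\<Sum>y\<in>UNIV. kpow K n x0 y * h y)"
      by (simp add: algebra_simps sum_subtractf sum_distrib_left)
    also have "\<dots> = 0" using rs kpow_harm[OF h, of x0 n] by simp
    finally have "\<forall>y\<in>UNIV. kpow K n x0 y * (h x0 - h y) = 0"
      by (subst sum_nonneg_eq_0_iff[symmetric]) (auto intro!: mult_nonneg_nonneg kpow_nonneg[OF st] simp: x0)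
    then have "kpow K n x0 z * (h x0 - h z) = 0" by blast
    then show ?thesis using n by simp
  qed
  show ?thesis using all[of x] all[of y] by simp
qed



definition Lop :: "('b::finite \<Rightarrow> 'b \<Rightarrow> real) \<Rightarrow> real^'b \<Rightarrow> real^'b" where
  "Lop K h = (\<chi> x. h$x - (\<Sum>y\<in>UNIV. K x y * h$y))"

lemma Lop_nth[simp]: "Lop K h $ x = h$x - (\<Sum>y\<in>UNIV. K x y * h$y)"
  by (simp add: Lop_def)

lemma Lop_mat: "Lop K = (\<lambda>h. h - (\<chi> i j. K i j) *v h)"
  by (auto simp: vec_eq_iff matrix_vector_mult_def)

lemma linear_Lop: "linear (Lop K)"
  unfolding Lop_mat by (intro linear_compose_sub bounded_linear.linear[OF bounded_linear_ident] matrix_vector_mul_linear)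

lemma Lop_ker:
  assumes st: "stoch K" and irr: "irreducible_kernel K" and "Lop K h = 0"
  shows "h$x = h$y"
proof -
  have "\<forall>x. h$x = (\<Sum>y\<in>UNIV. K x y * h$y)"
  proof
    fix x
    have "Lop K h $ x = 0" by (simp only: assms(3) zero_index)
    then show "h$x = (\<Sum>y\<in>UNIV. K x y * h$y)" by simp
  qed
  from harmonic_const[OF st irr this] show ?thesis .
qed

lemma Lop_not_one:
  assumes st: "stoch K"
  shows "Lop K h \<noteq> (\<chi> i. 1)"
proof
  assume eq: "Lop K h = (\<chi> i. 1)"
  have "Min (range (\<lambda>x. h$x)) \<in> range (\<lambda>x. h$x)" by (intro Min_in) auto
  then obtain x1 where "Min (range (\<lambda>x. h$x)) = h$x1" by blast
  then have x1: "\<forall>z. h$x1 \<le> h$z" using Min_le[of "range (\<lambda>x. h$x)"] by auto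
  have "h$x1 = (\<Sum>y\<in>UNIV. K x1 y * h$x1)" using st by (simp add: stoch_def sum_distrib_right[symmetric])
  also have "\<dots> \<le> (\<Sum>y\<in>UNIV. K x1 y * h$y)"
    using st x1 by (intro sum_mono mult_left_mono) (auto simp: stoch_def)
  finally have "Lop K h $ x1 \<le> 0" by simp
  with eq show False by (simp add: vec_eq_iff)
qed

lemma sum_const_vec:
  fixes v :: "real^'b::finite"
  assumes "\<And>x. v$x = v$x0"
  shows "(\<Sum>x\<in>UNIV. v$x) = real CARD('b) * v$x0"
proof -
  have "(\<Sum>x\<in>UNIV. v$x) = (\<Sum>x::'b\<in>UNIV. v$x0)" by (intro sum.cong refl) (rule assms)
  then show ?thesis by simp
qed

lemma dim_range_Lop:
  fixes K :: "'b::finite \<Rightarrow> 'b \<Rightarrow> real"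
  assumes st: "stoch K" and irr: "irreducible_kernel K"
  shows "dim (range (Lop K)) = DIM(real^'b) - 1"
proof -
  define one :: "real^'b" where "one = (\<chi> i. 1)"
  have one0: "one \<noteq> 0" by (simp add: one_def vec_eq_iff)
  define H where "H = {h. one \<bullet> h = 0}"
  have spH: "span H = H" unfolding H_def by (rule span_eq_iff[THEN iffD2]) (rule subspace_hyperplane)
  have inj: "inj_on (Lop K) (span H)"
  proof (rule inj_onI)
    fix a b assume a: "a \<in> span H" and b: "b \<in> span H" and e: "Lop K a = Lop K b"
    have "Lop K (a - b) = 0" using e linear_Lop[of K] by (simp add: linear_diff)
    then have c: "(a - b)$x = (a - b)$y" for x y using Lop_ker[OF st irr] by blast
    obtain x0 :: 'b where True by blast
    have aH: "a \<in> H" "b \<in> H" using a b spH by auto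
    then have "one \<bullet> (a - b) = 0" by (simp add: H_def inner_diff_right)
    then have s0: "(\<Sum>x\<in>UNIV. (a - b)$x) = 0" by (simp add: one_def inner_vec_def)
    have "(\<Sum>x\<in>UNIV. (a - b)$x) = real CARD('b) * (a - b)$x0" by (rule sum_const_vec) (rule c)
    then have "real CARD('b) * (a - b)$x0 = 0" using s0 by simp
    then have z: "(a - b)$x0 = 0" by simp
    have "\<forall>i. (a - b)$i = 0$i"
    proof
      fix i have "(a - b)$i = (a - b)$x0" by (rule c)
      then show "(a - b)$i = 0$i" using z by simp
    qed
    then have "a - b = 0" by (simp add: vec_eq_iff)
    then show "a = b" by simp
  qed
  have dH: "dim H = DIM(real^'b) - 1" unfolding H_def by (rule dim_hyperplane[OF one0])
  have "dim (Lop K ` H) = dim H" by (rule dim_image_eq[OF linear_Lop inj])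
  then have ge: "DIM(real^'b) - 1 \<le> dim (range (Lop K))" using dH dim_subset[of "Lop K ` H" "range (Lop K)"] by auto
  have sub: "subspace (range (Lop K))" by (rule linear_subspace_image[OF linear_Lop subspace_UNIV])
  have "dim (range (Lop K)) \<noteq> DIM(real^'b)"
  proof
    assume "dim (range (Lop K)) = DIM(real^'b)"
    then have "span (range (Lop K)) = UNIV" by (rule dim_eq_full[THEN iffD1])
    then have "range (Lop K) = UNIV" using sub span_eq_iff[of "range (Lop K)"] by simp
    then have "one \<in> range (Lop K)" by simp
    then obtain h where "one = Lop K h" by blast
    then have "Lop K h = one" by simp
    then show False using Lop_not_one[OF st] by (simp add: one_def)
  qed
  moreover have "dim (range (Lop K)) \<le> DIM(real^'b)" by (rule dim_subset_UNIV)
  ultimately show ?thesis using ge by linarith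
qed



lemma sum_delta_mult: fixes f :: "'b::finite \<Rightarrow> real" shows "(\<Sum>y\<in>UNIV. f y * (if y = j then 1 else 0)) = (f j::real)"
proof -
  have "(\<Sum>y\<in>UNIV. f y * (if y = j then 1 else 0)) = (\<Sum>y\<in>UNIV. if y = j then f y else 0)"
    by (intro sum.cong) auto
  then show ?thesis by simp
qed

lemma inv_sum:
  fixes K :: "'b::finite \<Rightarrow> 'b \<Rightarrow> real"
  assumes inv: "\<forall>y. (\<Sum>x\<in>UNIV. nu x * K x y) = nu y"
  shows "(\<Sum>x\<in>UNIV. nu x * (\<Sum>y\<in>UNIV. K x y * h y)) = (\<Sum>y\<in>UNIV. nu y * h y)"
proof -
  have "(\<Sum>x\<in>UNIV. nu x * (\<Sum>y\<in>UNIV. K x y * h y)) = (\<Sum>y\<in>UNIV. (\<Sum>x\<in>UNIV. nu x * K x y) * h y)"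
    by (simp add: sum_distrib_left sum_distrib_right mult.assoc) (rule sum.swap)
  also have "\<dots> = (\<Sum>y\<in>UNIV. nu y * h y)" using inv by simp
  finally show ?thesis .
qed

lemma exists_inv:
  fixes K :: "'b::finite \<Rightarrow> 'b \<Rightarrow> real"
  assumes st: "stoch K" and irr: "irreducible_kernel K"
  shows "\<exists>nu. is_dist nu \<and> (\<forall>y. (\<Sum>x\<in>UNIV. nu x * K x y) = nu y)"
proof -
  have "dim (range (Lop K)) < DIM(real^'b)" using dim_range_Lop[OF st irr] DIM_positive[where 'a="real^'b"] by linarith
  then obtain u :: "real^'b" where u0: "u \<noteq> 0" and ort: "\<And>y. y \<in> span (range (Lop K)) \<Longrightarrow> orthogonal u y"
    using orthogonal_to_subspace_exists[of "range (Lop K)"] by blast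
  have sinv: "(\<Sum>x\<in>UNIV. u$x * K x j) = u$j" for j
  proof -
    let ?e = "axis j (1::real)"
    have "orthogonal u (Lop K ?e)" by (intro ort span_base) auto
    then have o: "u \<bullet> Lop K ?e = 0" by (simp add: orthogonal_def)
    have le: "Lop K ?e $ x = (if x = j then 1 else 0) - K x j" for x
      by (simp add: axis_def sum_delta_mult)
    have "u \<bullet> Lop K ?e = (\<Sum>x\<in>UNIV. u$x * ((if x = j then 1 else 0) - K x j))"
      unfolding inner_vec_def le by simp
    also have "\<dots> = u$j - (\<Sum>x\<in>UNIV. u$x * K x j)"
      by (simp add: right_diff_distrib sum_subtractf sum_delta_mult)
    finally show ?thesis using o by simp
  qed
  define w where "w x = \<bar>u$x\<bar>" for x
  have Kn: "0 \<le> K x y" for x y using st by (simp add: stoch_def)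
  have Kr: "sum (K x) UNIV = 1" for x using st by (simp add: stoch_def)
  have wge: "w y \<le> (\<Sum>x\<in>UNIV. w x * K x y)" for y
  proof -
    have "w y = \<bar>\<Sum>x\<in>UNIV. u$x * K x y\<bar>" using sinv[of y] by (simp add: w_def)
    also have "\<dots> \<le> (\<Sum>x\<in>UNIV. \<bar>u$x * K x y\<bar>)" by (rule sum_abs)
    also have "\<dots> = (\<Sum>x\<in>UNIV. w x * K x y)" using Kn by (simp add: w_def abs_mult)
    finally show ?thesis .
  qed
  have "(\<Sum>y\<in>UNIV. (\<Sum>x\<in>UNIV. w x * K x y)) = (\<Sum>x\<in>UNIV. w x * sum (K x) UNIV)"
    by (simp add: sum_distrib_left) (rule sum.swap)
  also have "\<dots> = (\<Sum>y\<in>UNIV. w y)" using Kr by simp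
  finally have "(\<Sum>y\<in>UNIV. (\<Sum>x\<in>UNIV. w x * K x y) - w y) = 0" by (simp add: sum_subtractf)
  then have "\<forall>y\<in>UNIV. (\<Sum>x\<in>UNIV. w x * K x y) - w y = 0"
    by (subst sum_nonneg_eq_0_iff[symmetric]) (auto simp: wge)
  then have winv: "(\<Sum>x\<in>UNIV. w x * K x y) = w y" for y by simp
  obtain x0 where "u$x0 \<noteq> 0" using u0 by (auto simp: vec_eq_iff)
  then have "0 < w x0" by (simp add: w_def)
  also have "w x0 \<le> sum w UNIV" by (rule member_le_sum) (auto simp: w_def)
  finally have Spos: "0 < sum w UNIV" .
  define nu where "nu x = w x / sum w UNIV" for x
  have "is_dist nu" using Spos by (auto simp: is_dist_def nu_def w_def sum_divide_distrib[symmetric])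
  moreover have "(\<Sum>x\<in>UNIV. nu x * K x y) = nu y" for y
    using winv[of y] by (simp add: nu_def sum_divide_distrib[symmetric])
  ultimately show ?thesis by blast
qed

lemma poisson:
  fixes K :: "'b::finite \<Rightarrow> 'b \<Rightarrow> real"
  assumes st: "stoch K" and irr: "irreducible_kernel K"
    and inv: "\<forall>y. (\<Sum>x\<in>UNIV. nu x * K x y) = nu y" and s1: "sum nu UNIV = 1"
    and g: "(\<Sum>x\<in>UNIV. nu x * g x) = 0"
  shows "\<exists>h. \<forall>x. g x = h x - (\<Sum>y\<in>UNIV. K x y * h y)"
proof -
  define nuv :: "real^'b" where "nuv = (\<chi> x. nu x)"
  have nz: "nuv \<noteq> 0"
  proof
    assume "nuv = 0"
    then have "nu x = 0" for x by (simp add: nuv_def vec_eq_iff)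
    then show False using s1 by simp
  qed
  define N where "N = {v. nuv \<bullet> v = 0}"
  have sub: "range (Lop K) \<subseteq> N"
  proof safe
    fix h :: "real^'b"
    have "nuv \<bullet> Lop K h = (\<Sum>x\<in>UNIV. nu x * (h$x - (\<Sum>y\<in>UNIV. K x y * h$y)))"
      by (simp add: inner_vec_def nuv_def)
    also have "\<dots> = (\<Sum>x\<in>UNIV. nu x * h$x) - (\<Sum>x\<in>UNIV. nu x * (\<Sum>y\<in>UNIV. K x y * h$y))"
      by (simp add: right_diff_distrib sum_subtractf)
    also have "\<dots> = 0" using inv_sum[OF inv, of "\<lambda>y. h$y"] by simp
    finally show "Lop K h \<in> N" by (simp add: N_def)
  qed
  have "range (Lop K) = N"
  proof (rule subspace_dim_equal)
    show "subspace (range (Lop K))" by (rule linear_subspace_image[OF linear_Lop subspace_UNIV])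
    show "subspace N" unfolding N_def by (rule subspace_hyperplane)
    show "range (Lop K) \<subseteq> N" by (rule sub)
    show "dim N \<le> dim (range (Lop K))" unfolding N_def dim_hyperplane[OF nz] dim_range_Lop[OF st irr] by simp
  qed
  moreover have "(\<chi> x. g x) \<in> N" using g by (simp add: N_def nuv_def inner_vec_def)
  ultimately obtain h where "(\<chi> x. g x) = Lop K h" by blast
  then have "g x = h$x - (\<Sum>y\<in>UNIV. K x y * h$y)" for x by (metis Lop_nth vec_lambda_beta)
  then show ?thesis by blast
qed

lemma inv_unique:
  fixes K :: "'b::finite \<Rightarrow> 'b \<Rightarrow> real"
  assumes st: "stoch K" and irr: "irreducible_kernel K"
    and inv1: "\<forall>y. (\<Sum>x\<in>UNIV. nu1 x * K x y) = nu1 y" and s1: "sum nu1 UNIV = 1"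
    and inv2: "\<forall>y. (\<Sum>x\<in>UNIV. nu2 x * K x y) = nu2 y" and s2: "sum nu2 UNIV = 1"
  shows "nu1 = nu2"
proof
  fix z
  define g where "g x = (if x = z then 1 else 0) - nu1 z" for x
  have gs: "(\<Sum>x\<in>UNIV. nu x * g x) = nu z - nu1 z * sum nu UNIV" for nu :: "'b \<Rightarrow> real"
    by (simp add: g_def right_diff_distrib sum_subtractf sum_delta_mult sum_distrib_left[symmetric] mult.commute)
  obtain h where h: "\<forall>x. g x = h x - (\<Sum>y\<in>UNIV. K x y * h y)"
    using poisson[OF st irr inv1 s1, of g] gs[of nu1] s1 by auto
  have "(\<Sum>x\<in>UNIV. nu2 x * g x) = (\<Sum>x\<in>UNIV. nu2 x * (h x - (\<Sum>y\<in>UNIV. K x y * h y)))"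
    using h by simp
  also have "\<dots> = (\<Sum>x\<in>UNIV. nu2 x * h x) - (\<Sum>x\<in>UNIV. nu2 x * (\<Sum>y\<in>UNIV. K x y * h y))"
    by (simp add: right_diff_distrib sum_subtractf)
  also have "\<dots> = 0" using inv_sum[OF inv2, of h] by simp
  finally show "nu1 z = nu2 z" using gs[of nu2] s2 by simp
qed



lemma bounded_tele_lim:
  fixes f B :: "nat \<Rightarrow> real"
  assumes f: "\<And>n. f n = real n * J + A - B n" and B: "\<And>n. \<bar>B n\<bar> \<le> M"
  shows "(\<lambda>n. f n / real n) \<longlonglongrightarrow> J"
proof -
  have "(\<lambda>n. (\<bar>A\<bar> + M) / real n) \<longlonglongrightarrow> 0" by (rule lim_const_over_n)
  then have z: "(\<lambda>n. (A - B n) / real n) \<longlonglongrightarrow> 0"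
  proof (rule Lim_null_comparison[rotated])
    show "\<forall>\<^sub>F n in sequentially. norm ((A - B n) / real n) \<le> (\<bar>A\<bar> + M) / real n"
    proof (rule always_eventually, rule allI)
      fix n
      have "\<bar>A - B n\<bar> \<le> \<bar>A\<bar> + M" using B[of n] by linarith
      then show "norm ((A - B n) / real n) \<le> (\<bar>A\<bar> + M) / real n"
        by (simp add: divide_right_mono)
    qed
  qed
  have "(\<lambda>n. J + (A - B n) / real n) \<longlonglongrightarrow> J + 0" by (intro tendsto_add tendsto_const z)
  then have l: "(\<lambda>n. J + (A - B n) / real n) \<longlonglongrightarrow> J" by simp
  have ev: "\<forall>\<^sub>F n in sequentially. J + (A - B n) / real n = f n / real n"
  proof (rule eventually_sequentiallyI[of 1])
    fix n :: nat assume "1 \<le> n"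
    then show "J + (A - B n) / real n = f n / real n" by (simp add: f field_simps)
  qed
  show ?thesis by (rule Lim_transform_eventually[OF l ev])
qed

lemma P_nonneg: "umco_channel P \<Longrightarrow> 0 \<le> P b a b'"
  by (simp add: umco_channel_def is_dist_def)

lemma p_nonneg: "ti_policy p \<Longrightarrow> 0 \<le> p b a"
  by (simp add: ti_policy_def is_dist_def)

lemma stoch_outK:
  assumes "umco_channel P" and "ti_policy p"
  shows "stoch (outK P p)"
proof -
  have "0 \<le> outK P p x y" for x y
    unfolding outK_def using assms by (intro sum_nonneg mult_nonneg_nonneg P_nonneg p_nonneg)
  moreover have "sum (outK P p x) UNIV = 1" for x
  proof -
    have "sum (outK P p x) UNIV = (\<Sum>a\<in>UNIV. (\<Sum>y\<in>UNIV. P x a y) * p x a)"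
      unfolding outK_def by (simp add: sum_distrib_right) (rule sum.swap)
    also have "\<dots> = 1" using assms by (simp add: umco_channel_def ti_policy_def is_dist_def)
    finally show ?thesis .
  qed
  ultimately show ?thesis by (simp add: stoch_def)
qed

lemma marg_Suc':
  "marg P p mu (Suc i) z = (\<Sum>b\<in>UNIV. marg P p mu i b * outK P p b z)"
  by (simp add: outK_def sum_distrib_left ac_simps)

lemma marg_dist:
  assumes "umco_channel P" and "ti_policy p" and "is_dist mu"
  shows "is_dist (marg P p mu i)"
proof (induction i)
  case 0
  then show ?case using assms by simp
next
  case (Suc i)
  have st: "stoch (outK P p)" by (rule stoch_outK[OF assms(1,2)])
  have "0 \<le> marg P p mu (Suc i) z" for z
    unfolding marg_Suc' using Suc st by (intro sum_nonneg mult_nonneg_nonneg) (auto simp: is_dist_def stoch_def)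
  moreover have "sum (marg P p mu (Suc i)) UNIV = 1"
  proof -
    have "sum (marg P p mu (Suc i)) UNIV = (\<Sum>b\<in>UNIV. marg P p mu i b * sum (outK P p b) UNIV)"
      unfolding marg_Suc' by (simp add: sum_distrib_left) (rule sum.swap)
    also have "\<dots> = 1" using st Suc by (simp add: stoch_def is_dist_def)
    finally show ?thesis .
  qed
  ultimately show ?case by (simp add: is_dist_def)
qed

lemma expsum_eq:
  "expsum P p mu n = (\<Sum>i<n. \<Sum>b\<in>UNIV. marg P p mu i b * ell P p b)"
  by (simp add: expsum_def ell_def ell1_def outK_def sum_distrib_left ac_simps)

lemma marg_push:
  "(\<Sum>b\<in>UNIV. marg P p mu i b * (\<Sum>z\<in>UNIV. outK P p b z * V z)) = (\<Sum>z\<in>UNIV. marg P p mu (Suc i) z * V z)"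
  unfolding marg_Suc' by (simp add: sum_distrib_left sum_distrib_right ac_simps) (rule sum.swap)

lemma expsum_tele:
  assumes "umco_channel P" and "ti_policy p" and "is_dist mu"
  shows "expsum P p mu n = real n * c + (\<Sum>b\<in>UNIV. mu b * V b) - (\<Sum>b\<in>UNIV. marg P p mu n b * V b)
     + (\<Sum>i<n. \<Sum>b\<in>UNIV. marg P p mu i b * (ell P p b + (\<Sum>z\<in>UNIV. outK P p b z * V z) - c - V b))"
proof (induction n)
  case 0
  then show ?case by (simp add: expsum_def)
next
  case (Suc n)
  let ?m = "marg P p mu n" and ?m' = "marg P p mu (Suc n)"
  have s1: "sum ?m UNIV = 1" using marg_dist[OF assms, of n] by (simp add: is_dist_def)
  have "(\<Sum>b\<in>UNIV. ?m b * (ell P p b + (\<Sum>z\<in>UNIV. outK P p b z * V z) - c - V b))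
      = (\<Sum>b\<in>UNIV. ?m b * ell P p b) + (\<Sum>b\<in>UNIV. ?m b * (\<Sum>z\<in>UNIV. outK P p b z * V z))
        - c * sum ?m UNIV - (\<Sum>b\<in>UNIV. ?m b * V b)"
    by (simp add: algebra_simps sum.distrib sum_subtractf sum_distrib_left)
  also have "\<dots> = (\<Sum>b\<in>UNIV. ?m b * ell P p b) + (\<Sum>z\<in>UNIV. ?m' z * V z) - c - (\<Sum>b\<in>UNIV. ?m b * V b)"
    by (simp only: marg_push s1 mult_1_right)
  finally have step: "(\<Sum>b\<in>UNIV. ?m b * (ell P p b + (\<Sum>z\<in>UNIV. outK P p b z * V z) - c - V b))
      = (\<Sum>b\<in>UNIV. ?m b * ell P p b) + (\<Sum>z\<in>UNIV. ?m' z * V z) - c - (\<Sum>b\<in>UNIV. ?m b * V b)" .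
  have "expsum P p mu (Suc n) = expsum P p mu n + (\<Sum>b\<in>UNIV. ?m b * ell P p b)"
    by (simp add: expsum_eq)
  then show ?case using Suc step by (simp add: algebra_simps)
qed

lemma marg_bound:
  assumes "umco_channel P" and "ti_policy p" and "is_dist mu"
  shows "\<bar>\<Sum>b\<in>UNIV. marg P p mu n b * V b\<bar> \<le> (\<Sum>b\<in>UNIV. \<bar>V b\<bar>)"
proof -
  have d: "is_dist (marg P p mu n)" by (rule marg_dist[OF assms])
  have le1: "marg P p mu n b \<le> 1" for b
  proof -
    have "marg P p mu n b \<le> sum (marg P p mu n) UNIV" using d by (intro member_le_sum) (auto simp: is_dist_def)
    then show ?thesis using d by (simp add: is_dist_def)
  qed
  have "\<bar>\<Sum>b\<in>UNIV. marg P p mu n b * V b\<bar> \<le> (\<Sum>b\<in>UNIV. \<bar>marg P p mu n b * V b\<bar>)" by (rule sum_abs)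
  also have "\<dots> \<le> (\<Sum>b\<in>UNIV. \<bar>V b\<bar>)"
  proof (rule sum_mono)
    fix b
    have "\<bar>marg P p mu n b * V b\<bar> = marg P p mu n b * \<bar>V b\<bar>" using d by (simp add: is_dist_def abs_mult)
    also have "\<dots> \<le> 1 * \<bar>V b\<bar>" using le1[of b] by (intro mult_right_mono) auto
    finally show "\<bar>marg P p mu n b * V b\<bar> \<le> \<bar>V b\<bar>" by simp
  qed
  finally show ?thesis .
qed

lemma inv_conv:
  assumes um: "umco_channel P" and ti: "ti_policy p" and irr: "irreducible_kernel (outK P p)"
    and mu: "is_dist mu" and nu: "invariant_dist P p nu"
  shows "(\<lambda>n. expsum P p mu n / real n) \<longlonglongrightarrow> (\<Sum>b\<in>UNIV. nu b * ell P p b)"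
proof -
  let ?K = "outK P p" and ?J = "\<Sum>b\<in>UNIV. nu b * ell P p b"
  have st: "stoch ?K" by (rule stoch_outK[OF um ti])
  have inv: "\<forall>y. (\<Sum>x\<in>UNIV. nu x * ?K x y) = nu y" using nu by (simp add: invariant_dist_def mult.commute)
  have s1: "sum nu UNIV = 1" using nu by (simp add: invariant_dist_def is_dist_def)
  have "(\<Sum>x\<in>UNIV. nu x * (ell P p x - ?J)) = 0"
    by (simp add: right_diff_distrib sum_subtractf sum_distrib_right[symmetric] s1)
  from poisson[OF st irr inv s1 this] obtain h where h: "\<forall>x. ell P p x - ?J = h x - (\<Sum>y\<in>UNIV. ?K x y * h y)"
    by blast
  have D0: "ell P p b + (\<Sum>z\<in>UNIV. ?K b z * h z) - ?J - h b = 0" for b using h by (simp add: algebra_simps)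
  show ?thesis
  proof (rule bounded_tele_lim)
    fix n
    show "expsum P p mu n = real n * ?J + (\<Sum>b\<in>UNIV. mu b * h b) - (\<Sum>b\<in>UNIV. marg P p mu n b * h b)"
      using expsum_tele[OF um ti mu, of n ?J h] by (simp add: D0)
    show "\<bar>\<Sum>b\<in>UNIV. marg P p mu n b * h b\<bar> \<le> (\<Sum>b\<in>UNIV. \<bar>h b\<bar>)" by (rule marg_bound[OF um ti mu])
  qed
qed



lemma inv_pos:
  fixes K :: "'b::finite \<Rightarrow> 'b \<Rightarrow> real"
  assumes st: "stoch K" and irr: "irreducible_kernel K"
    and inv: "\<forall>y. (\<Sum>x\<in>UNIV. w x * K x y) = w y" and d: "is_dist w"
  shows "0 < w y"
proof -
  have "\<exists>x. 0 < w x"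
  proof (rule ccontr)
    assume "\<not> (\<exists>x. 0 < w x)"
    then have "w x = 0" for x using d by (auto simp: is_dist_def not_less intro: antisym)
    then show False using d by (simp add: is_dist_def)
  qed
  then obtain x where x: "0 < w x" by blast
  obtain n where n: "kpow K n x y > 0" using irr unfolding irreducible_kernel_def by blast
  have "w x * kpow K n x y \<le> (\<Sum>x'\<in>UNIV. w x' * kpow K n x' y)"
    using d kpow_nonneg[OF st] by (intro member_le_sum) (auto simp: is_dist_def)
  also have "\<dots> = w y" by (rule kpow_inv[OF inv])
  finally show ?thesis using x n by (smt (verit) mult_pos_pos)
qed

lemma inv_conv_form:
  "invariant_dist P p nu \<longleftrightarrow> is_dist nu \<and> (\<forall>y. (\<Sum>x\<in>UNIV. nu x * outK P p x y) = nu y)"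
  by (simp add: invariant_dist_def mult.commute)

lemma inv_exists_unique:
  assumes um: "umco_channel P" and ti: "ti_policy p" and irr: "irreducible_kernel (outK P p)"
  shows "\<exists>!nu. invariant_dist P p nu"
proof -
  have st: "stoch (outK P p)" by (rule stoch_outK[OF um ti])
  obtain nu where "is_dist nu" "\<forall>y. (\<Sum>x\<in>UNIV. nu x * outK P p x y) = nu y"
    using exists_inv[OF st irr] by blast
  then have e: "invariant_dist P p nu" by (simp add: inv_conv_form)
  show ?thesis
  proof (rule ex1I[of "invariant_dist P p" nu, OF e])
    fix nu' assume "invariant_dist P p nu'"
    then have a: "is_dist nu'" "\<forall>y. (\<Sum>x\<in>UNIV. nu' x * outK P p x y) = nu' y"
      by (simp_all add: inv_conv_form)
    from e have b: "is_dist nu" "\<forall>y. (\<Sum>x\<in>UNIV. nu x * outK P p x y) = nu y"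
      by (simp_all add: inv_conv_form)
    show "nu' = nu"
      by (rule inv_unique[OF st irr a(2) _ b(2)]) (use a(1) b(1) in \<open>simp_all add: is_dist_def\<close>)
  qed
qed

lemma Jinf_eq:
  assumes um: "umco_channel P" and ti: "ti_policy p" and irr: "irreducible_kernel (outK P p)"
    and nu: "invariant_dist P p nu"
  shows "Jinf P p = (\<Sum>b\<in>UNIV. nu b * ell P p b)"
proof -
  have "(THE nu. invariant_dist P p nu) = nu"
    by (rule the1_equality[of "invariant_dist P p" nu, OF inv_exists_unique[OF um ti irr] nu])
  then show ?thesis by (simp add: Jinf_def)
qed



lemma liminf_of_lim:
  fixes g :: "nat \<Rightarrow> real"
  assumes "g \<longlonglongrightarrow> J"
  shows "liminf (\<lambda>n. ereal (g n)) = ereal J"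
  by (rule lim_imp_Liminf) (use assms in auto)

lemma bellman_ineq:
  assumes um: "umco_channel P"
    and irrall: "\<forall>p. ti_policy p \<longrightarrow> irreducible_kernel (outK P p)"
    and tips: "ti_policy ps"
    and mx: "\<forall>p. ti_policy p \<longrightarrow> Jinf P p \<le> Jinf P ps"
    and V: "\<forall>b. ell P ps b - Jinf P ps = V b - (\<Sum>y\<in>UNIV. outK P ps b y * V y)"
    and q: "is_dist q"
  shows "ell1 P b0 q + (\<Sum>z\<in>UNIV. V z * (\<Sum>a\<in>UNIV. P b0 a z * q a)) \<le> Jinf P ps + V b0"
proof (rule ccontr)
  assume "\<not> ?thesis"
  then have gt: "Jinf P ps + V b0 < ell1 P b0 q + (\<Sum>z\<in>UNIV. V z * (\<Sum>a\<in>UNIV. P b0 a z * q a))" by simp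
  define p' where "p' = ps(b0 := q)"
  have ti': "ti_policy p'" using tips q by (simp add: p'_def ti_policy_def)
  have irr': "irreducible_kernel (outK P p')" using irrall ti' by blast
  have st': "stoch (outK P p')" by (rule stoch_outK[OF um ti'])
  obtain nu' where nu': "invariant_dist P p' nu'" using inv_exists_unique[OF um ti' irr'] by blast
  have J': "Jinf P p' = (\<Sum>b\<in>UNIV. nu' b * ell P p' b)" by (rule Jinf_eq[OF um ti' irr' nu'])
  have inv': "\<forall>y. (\<Sum>x\<in>UNIV. nu' x * outK P p' x y) = nu' y" and d': "is_dist nu'"
    using nu' by (simp_all add: inv_conv_form)
  have s1: "sum nu' UNIV = 1" using d' by (simp add: is_dist_def)
  define D where "D b = ell P p' b + (\<Sum>z\<in>UNIV. outK P p' b z * V z) - Jinf P ps - V b" for b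
  have "(\<Sum>b\<in>UNIV. nu' b * D b) = (\<Sum>b\<in>UNIV. nu' b * ell P p' b)
      + (\<Sum>b\<in>UNIV. nu' b * (\<Sum>z\<in>UNIV. outK P p' b z * V z)) - Jinf P ps * sum nu' UNIV - (\<Sum>b\<in>UNIV. nu' b * V b)"
    by (simp add: D_def algebra_simps sum.distrib sum_subtractf sum_distrib_left)
  also have "\<dots> = Jinf P p' - Jinf P ps"
    using inv_sum[OF inv', of V] s1 J' by simp
  finally have sumD: "(\<Sum>b\<in>UNIV. nu' b * D b) = Jinf P p' - Jinf P ps" .
  have D0: "D b = 0" if "b \<noteq> b0" for b
  proof -
    have "p' b = ps b" using that by (simp add: p'_def)
    then have "ell P p' b = ell P ps b" "\<And>z. outK P p' b z = outK P ps b z"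
      by (simp_all add: ell_def outK_def)
    then show ?thesis using V[rule_format, of b] by (simp add: D_def)
  qed
  have "p' b0 = q" by (simp add: p'_def)
  then have "ell P p' b0 = ell1 P b0 q" "\<And>z. outK P p' b0 z = (\<Sum>a\<in>UNIV. P b0 a z * q a)"
    by (simp_all add: ell_def outK_def)
  then have Db0: "0 < D b0" using gt by (simp add: D_def mult.commute)
  have "(\<Sum>b\<in>UNIV. nu' b * D b) = nu' b0 * D b0 + (\<Sum>b\<in>UNIV - {b0}. nu' b * D b)"
    by (simp add: sum.remove)
  also have "(\<Sum>b\<in>UNIV - {b0}. nu' b * D b) = 0" using D0 by (intro sum.neutral) auto
  finally have "(\<Sum>b\<in>UNIV. nu' b * D b) = nu' b0 * D b0" by simp
  moreover have "0 < nu' b0" by (rule inv_pos[OF st' irr' inv' d'])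
  ultimately have "Jinf P ps < Jinf P p'" using sumD Db0 by (smt (verit) mult_pos_pos)
  with mx ti' show False by force
qed



theorem mainTheorem8:
  fixes P :: "'b::finite \<Rightarrow> 'a::finite \<Rightarrow> 'b \<Rightarrow> real"
  assumes "umco_channel P"
    and "\<forall>p. ti_policy p \<longrightarrow> irreducible_kernel (outK P p)"
  shows "(\<forall>p. ti_policy p \<longrightarrow>
            (\<exists>!nu. invariant_dist P p nu) \<and>
            (\<forall>nu. invariant_dist P p nu \<longrightarrow>
               (\<forall>mu. is_dist mu \<longrightarrow> Jmu P p mu = ereal (\<Sum>b\<in>UNIV. nu b * ell P p b))))
       \<and> (\<forall>ps. ti_policy ps \<and> (\<forall>p. ti_policy p \<longrightarrow> Jinf P p \<le> Jinf P ps) \<longrightarrow>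
            (\<exists>V :: 'b \<Rightarrow> real. \<forall>b. Jinf P ps + V b =
               (SUP q\<in>{q. is_dist q}. ell1 P b q + (\<Sum>z\<in>UNIV. V z * (\<Sum>a\<in>UNIV. P b a z * q a)))) \<and>
            (\<forall>mu. is_dist mu \<longrightarrow> ereal (Jinf P ps) = capacity_FB P mu))"
proof (intro conjI allI impI)
  note um = assms(1) and irrall = assms(2)
  fix p :: "'b \<Rightarrow> 'a \<Rightarrow> real" assume ti: "ti_policy p"
  have irr: "irreducible_kernel (outK P p)" using irrall ti by blast
  show "\<exists>!nu. invariant_dist P p nu" by (rule inv_exists_unique[OF um ti irr])
  fix nu mu :: "'b \<Rightarrow> real" assume nu: "invariant_dist P p nu" and mu: "is_dist mu"
  show "Jmu P p mu = ereal (\<Sum>b\<in>UNIV. nu b * ell P p b)"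
    unfolding Jmu_def by (rule liminf_of_lim[OF inv_conv[OF um ti irr mu nu]])
next
  note um = assms(1) and irrall = assms(2)
  fix ps :: "'b \<Rightarrow> 'a \<Rightarrow> real" assume a: "ti_policy ps \<and> (\<forall>p. ti_policy p \<longrightarrow> Jinf P p \<le> Jinf P ps)"
  then have tips: "ti_policy ps" and mx: "\<forall>p. ti_policy p \<longrightarrow> Jinf P p \<le> Jinf P ps" by auto
  have irr: "irreducible_kernel (outK P ps)" using irrall tips by blast
  have st: "stoch (outK P ps)" by (rule stoch_outK[OF um tips])
  obtain nus where nus: "invariant_dist P ps nus" using inv_exists_unique[OF um tips irr] by blast
  define J where "J = Jinf P ps"
  have J: "J = (\<Sum>b\<in>UNIV. nus b * ell P ps b)" unfolding J_def by (rule Jinf_eq[OF um tips irr nus])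
  have inv: "\<forall>y. (\<Sum>x\<in>UNIV. nus x * outK P ps x y) = nus y" and d: "is_dist nus"
    using nus by (simp_all add: inv_conv_form)
  have s1: "sum nus UNIV = 1" using d by (simp add: is_dist_def)
  have "(\<Sum>x\<in>UNIV. nus x * (ell P ps x - J)) = 0"
    by (simp add: J right_diff_distrib sum_subtractf sum_distrib_right[symmetric] s1)
  from poisson[OF st irr inv s1 this] obtain V where V: "\<forall>x. ell P ps x - J = V x - (\<Sum>y\<in>UNIV. outK P ps x y * V y)"
    by blast
  have BI: "ell1 P b q + (\<Sum>z\<in>UNIV. V z * (\<Sum>a\<in>UNIV. P b a z * q a)) \<le> J + V b" if "is_dist q" for b q
    unfolding J_def by (rule bellman_ineq[OF um irrall tips mx V[unfolded J_def] that])
  have att: "ell1 P b (ps b) + (\<Sum>z\<in>UNIV. V z * (\<Sum>a\<in>UNIV. P b a z * ps b a)) = J + V b" for b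
  proof -
    have "ell1 P b (ps b) + (\<Sum>z\<in>UNIV. V z * (\<Sum>a\<in>UNIV. P b a z * ps b a))
        = ell P ps b + (\<Sum>z\<in>UNIV. outK P ps b z * V z)"
      by (simp add: ell_def outK_def mult.commute)
    also have "\<dots> = J + V b" using V[rule_format, of b] by simp
    finally show ?thesis .
  qed
  have dps: "is_dist (ps b)" for b using tips by (simp add: ti_policy_def)
  show "\<exists>V :: 'b \<Rightarrow> real. \<forall>b. Jinf P ps + V b =
               (SUP q\<in>{q. is_dist q}. ell1 P b q + (\<Sum>z\<in>UNIV. V z * (\<Sum>a\<in>UNIV. P b a z * q a)))"
  proof (intro exI allI)
    fix b
    show "Jinf P ps + V b = (SUP q\<in>{q. is_dist q}. ell1 P b q + (\<Sum>z\<in>UNIV. V z * (\<Sum>a\<in>UNIV. P b a z * q a)))"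
      unfolding J_def[symmetric]
    proof (rule cSup_eq_maximum[symmetric])
      show "J + V b \<in> (\<lambda>q. ell1 P b q + (\<Sum>z\<in>UNIV. V z * (\<Sum>a\<in>UNIV. P b a z * q a))) ` {q. is_dist q}"
      proof (rule image_eqI)
        show "J + V b = ell1 P b (ps b) + (\<Sum>z\<in>UNIV. V z * (\<Sum>a\<in>UNIV. P b a z * ps b a))"
          using att[of b] by simp
        show "ps b \<in> {q. is_dist q}" using dps[of b] by simp
      qed
      fix x assume "x \<in> (\<lambda>q. ell1 P b q + (\<Sum>z\<in>UNIV. V z * (\<Sum>a\<in>UNIV. P b a z * q a))) ` {q. is_dist q}"
      then show "x \<le> J + V b" using BI by auto
    qed
  qed
  fix mu :: "'b \<Rightarrow> real" assume mu: "is_dist mu"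
  define M where "M = (\<Sum>b\<in>UNIV. \<bar>V b\<bar>)"
  define U where "U n = real n * J + 2 * M" for n :: nat
  have up: "expsum P p mu n \<le> U n" if ti: "ti_policy p" for p :: "'b \<Rightarrow> 'a \<Rightarrow> real" and n
  proof -
    have Dle: "ell P p b + (\<Sum>z\<in>UNIV. outK P p b z * V z) - J - V b \<le> 0" for b
    proof -
      have "is_dist (p b)" using ti by (simp add: ti_policy_def)
      from BI[OF this, of b] show ?thesis by (simp add: ell_def outK_def mult.commute)
    qed
    have "(\<Sum>i<n. \<Sum>b\<in>UNIV. marg P p mu i b * (ell P p b + (\<Sum>z\<in>UNIV. outK P p b z * V z) - J - V b)) \<le> 0"
    proof (intro sum_nonpos mult_nonneg_nonpos)
      fix i b
      show "0 \<le> marg P p mu i b" using marg_dist[OF um ti mu, of i] by (simp add: is_dist_def)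
      show "ell P p b + (\<Sum>z\<in>UNIV. outK P p b z * V z) - J - V b \<le> 0" by (rule Dle)
    qed
    moreover have "\<bar>\<Sum>b\<in>UNIV. marg P p mu n b * V b\<bar> \<le> M" unfolding M_def by (rule marg_bound[OF um ti mu])
    moreover have "\<bar>\<Sum>b\<in>UNIV. mu b * V b\<bar> \<le> M" unfolding M_def using marg_bound[OF um ti mu, of 0 V] by simp
    ultimately show ?thesis using expsum_tele[OF um ti mu, of n J V] unfolding U_def by linarith
  qed
  define F where "F n = ereal (1 / real n) * (SUP p\<in>{p. ti_policy p}. ereal (expsum P p mu n))" for n
  have Fup: "F n \<le> ereal (U n / real n)" for n
  proof -
    have "(SUP p\<in>{p. ti_policy p}. ereal (expsum P p mu n)) \<le> ereal (U n)"
      using up by (intro SUP_least) auto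
    then have "F n \<le> ereal (1 / real n) * ereal (U n)" unfolding F_def
      by (rule ereal_mult_left_mono) simp
    then show ?thesis by simp
  qed
  have Flo: "ereal (expsum P ps mu n / real n) \<le> F n" for n
  proof -
    have "ereal (expsum P ps mu n) \<le> (SUP p\<in>{p. ti_policy p}. ereal (expsum P p mu n))"
      using tips by (intro SUP_upper) auto
    then have "ereal (1 / real n) * ereal (expsum P ps mu n) \<le> F n" unfolding F_def
      by (rule ereal_mult_left_mono) simp
    then show ?thesis by simp
  qed
  have l1: "liminf (\<lambda>n. ereal (U n / real n)) = ereal J"
    by (rule liminf_of_lim, rule bounded_tele_lim[of U J "2 * M" "\<lambda>_. 0" 0]) (simp_all add: U_def)
  have l2: "liminf (\<lambda>n. ereal (expsum P ps mu n / real n)) = ereal J"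
    unfolding J by (rule liminf_of_lim[OF inv_conv[OF um tips irr mu nus]])
  have "liminf F \<le> ereal J" using Liminf_mono[of F "\<lambda>n. ereal (U n / real n)" sequentially] Fup l1 by simp
  moreover have "ereal J \<le> liminf F"
    using Liminf_mono[of "\<lambda>n. ereal (expsum P ps mu n / real n)" F sequentially] Flo l2 by simp
  ultimately have "liminf F = ereal J" by (rule antisym)
  then show "ereal (Jinf P ps) = capacity_FB P mu"
    unfolding capacity_FB_def J_def F_def by simp
qed

end
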